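(* The super-Apollonian group $\mathcal A^S=\langle\mathbf S_1,\mathbf S_2,\mathbf S_3,\mathbf S_4,\mathbf S_1^\perp,\mathbf S_2^\perp,\mathbf S_3^\perp,\mathbf S_4^\perp\rangle\subset GL(4,\mathbb Z)$ is a Coxeter group with the complete set of defining relations $$\mathbf S_i^2=(\mathbf S_i^\perp)^2=\mathbf I\ (1\le i\le4),\qquad (\mathbf S_i\mathbf S_j^\perp)^2=\mathbf I\ (i\neq j).$$ That is, the abstract group with generators $s_1,\dots,s_4,t_1,\dots,t_4$ and relations $s_i^2=t_i^2=1$ and $(s_it_j)^2=1$ for $i\ne j$ is isomorphic to $\mathcal A^S$ via $s_i\mapsto\mathbf S_i$, $t_i\mapsto\mathbf S_i^\perp$.
   Context: $\mathbf S_i$ is the $4\times4$ integer matrix agreeing with the identity except in row $i$, which has $-1$ in position $i$ and $2$ in the other three positions (e.g. first row of $\mathbf S_1$ is $(-1,2,2,2)$); $\mathbf S_i^\perp=\mathbf S_i^T$. *)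

theory Defs
  imports "HOL-Analysis.Analysis" "HOL-Library.Numeral_Type"
begin

text \<open>The matrix S_i (index i ranges over the 4-element type 4; the element k of type 4
  stands for the paper's index k+1). Row i: -1 at position i, 2 elsewhere; other rows
  agree with the identity.\<close>
definition S_mat :: "4 \<Rightarrow> int^4^4" where
  "S_mat i = (\<chi> r c. if r = i then (if c = i then -1 else 2) else (if r = c then 1 else 0))"

definition S_perp :: "4 \<Rightarrow> int^4^4" where
  "S_perp i = transpose (S_mat i)"

datatype letter = Sg 4 | Tg 4

definition letter_mat :: "letter \<Rightarrow> int^4^4" where
  "letter_mat a = (case a of Sg i \<Rightarrow> S_mat i | Tg i \<Rightarrow> S_perp i)"

definition eval_word :: "letter list \<Rightarrow> int^4^4" where
  "eval_word w = foldr (\<lambda>a M. letter_mat a ** M) w (mat 1)"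

definition relators :: "letter list set" where
  "relators = {[a, a] | a. True} \<union> {[Sg i, Tg j, Sg i, Tg j] | i j. i \<noteq> j}"

text \<open>Equality in the finitely presented group: the congruence on words generated by
  deleting a relator (every generator is an involution, so words over the letters represent
  all elements; the presented group is words modulo this congruence).\<close>
inductive word_eq :: "letter list \<Rightarrow> letter list \<Rightarrow> bool" where
  refl: "word_eq w w"
| sym: "word_eq u v \<Longrightarrow> word_eq v u"
| trans: "word_eq u v \<Longrightarrow> word_eq v w \<Longrightarrow> word_eq u w"
| rel: "r \<in> relators \<Longrightarrow> word_eq (x @ r @ y) (x @ y)"

end

theory Submission imports Defs begin

definition sg :: "int^4 \<Rightarrow> int" where "sg x = (\<Sum>k\<in>UNIV. x$k)"
definition qf :: "int^4 \<Rightarrow> int" where "qf x = (sg x)^2 - 2*(\<Sum>k\<in>UNIV. (x$k)^2)"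
fun fl :: "letter \<Rightarrow> int^4 \<Rightarrow> int" where
  "fl (Sg i) x = sg x - 2*x$i"
| "fl (Tg i) x = x$i"
definition cm :: "letter \<Rightarrow> letter \<Rightarrow> bool" where
  "cm a b \<longleftrightarrow> (\<exists>i j. i \<noteq> j \<and> ((a = Sg i \<and> b = Tg j) \<or> (a = Tg j \<and> b = Sg i)))"
definition v0 :: "int^4" where "v0 = (\<chi> k. 1)"
definition pt :: "letter list \<Rightarrow> int^4" where "pt w = eval_word w *v v0"

lemma Smv: "S_mat i *v x = (\<chi> k. if k = i then 2 * sg x - 3 * x$i else x$k)"
  using exhaust_4[of i]
  by (auto simp: S_mat_def sg_def matrix_vector_mult_def vec_eq_iff forall_4 sum_4)
lemma Tmv: "S_perp i *v x = (\<chi> k. if k = i then - x$i else x$k + 2*x$i)"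
  using exhaust_4[of i]
  by (auto simp: S_perp_def transpose_def S_mat_def matrix_vector_mult_def vec_eq_iff forall_4 sum_4)

lemma SS: "S_mat i ** S_mat i = mat 1"
  unfolding matrix_eq
  apply (simp add: matrix_vector_mul_assoc[symmetric] Smv)
  using exhaust_4[of i]
  by (auto simp: vec_eq_iff forall_4 sum_4 sg_def)
lemma TT: "S_perp i ** S_perp i = mat 1"
  unfolding matrix_eq
  apply (simp add: matrix_vector_mul_assoc[symmetric] Tmv)
  using exhaust_4[of i]
  by (auto simp: vec_eq_iff forall_4 sum_4)
lemma ST: "i \<noteq> j \<Longrightarrow> S_mat i ** (S_perp j ** (S_mat i ** S_perp j)) = mat 1"
  unfolding matrix_eq
  apply (simp add: matrix_vector_mul_assoc[symmetric] Smv Tmv)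
  using exhaust_4[of i] exhaust_4[of j]
  by (auto simp: vec_eq_iff forall_4 sum_4 sg_def)

lemma eval_Nil: "eval_word [] = mat 1" by (simp add: eval_word_def)
lemma eval_Cons: "eval_word (a#w) = letter_mat a ** eval_word w" by (simp add: eval_word_def)
lemma eval_append: "eval_word (u @ v) = eval_word u ** eval_word v"
  by (induction u) (simp_all add: eval_Nil eval_Cons matrix_mul_assoc matrix_mul_lid)

lemma rel_eval: "r \<in> relators \<Longrightarrow> eval_word r = mat 1"
  unfolding relators_def
  apply (auto simp: eval_Cons eval_Nil matrix_mul_rid)
  subgoal for a by (cases a) (simp_all add: letter_mat_def SS TT)
  subgoal for i j by (simp add: letter_mat_def ST)
  done

lemma word_eq_eval: "word_eq u v \<Longrightarrow> eval_word u = eval_word v"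
  by (induction rule: word_eq.induct) (simp_all add: eval_append rel_eval matrix_mul_lid)

lemma cong: "word_eq u v \<Longrightarrow> word_eq (x @ u @ y) (x @ v @ y)"
proof (induction arbitrary: x y rule: word_eq.induct)
  case (refl w) then show ?case by (rule word_eq.refl)
next
  case (sym u v) then show ?case by (simp add: word_eq.sym)
next
  case (trans u v w) then show ?case by (meson word_eq.trans)
next
  case (rel r x' y')
  have "word_eq ((x @ x') @ r @ (y' @ y)) ((x @ x') @ (y' @ y))" by (rule word_eq.rel[OF rel])
  then show ?case by simp
qed

lemma aa_rel: "[a,a] \<in> relators" by (auto simp: relators_def)

lemma cancel: "word_eq (a#a#w) w"
  using word_eq.rel[OF aa_rel, of "[]" a w] by simp

lemma swap_rel: assumes "[p,q,p,q] \<in> relators" shows "word_eq (q#p#w) (p#q#w)"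
proof -
  have 1: "word_eq ([] @ [p,q,p,q] @ (q#p#w)) ([] @ (q#p#w))" by (rule word_eq.rel[OF assms])
  have 2: "word_eq ([p,q,p] @ [q,q] @ (p#w)) ([p,q,p] @ (p#w))" by (rule word_eq.rel[OF aa_rel])
  have 3: "word_eq ([p,q] @ [p,p] @ w) ([p,q] @ w)" by (rule word_eq.rel[OF aa_rel])
  from 1 2 3 show ?thesis by simp (meson word_eq.sym word_eq.trans)
qed

lemma swap: "cm b c \<Longrightarrow> word_eq (b#c#w) (c#b#w)"
  unfolding cm_def
proof (elim exE conjE disjE)
  fix i j assume "i \<noteq> j" "b = Sg i" "c = Tg j"
  then have "[b,c,b,c] \<in> relators" by (auto simp: relators_def)
  then show ?thesis using swap_rel word_eq.sym by blast
next
  fix i j assume "i \<noteq> j" "b = Tg j" "c = Sg i"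
  then have "[c,b,c,b] \<in> relators" by (auto simp: relators_def)
  then show ?thesis using swap_rel by blast
qed

lemma rev_cancel: "word_eq (v @ rev v) []"
proof (induction v)
  case Nil then show ?case by (simp add: word_eq.refl)
next
  case (Cons c v)
  have "word_eq ([c] @ (v @ rev v) @ [c]) ([c] @ [] @ [c])" by (rule cong[OF Cons])
  then show ?case using cancel[of c "[]"] by (simp add: word_eq.trans)
qed


lemma lm_S: "letter_mat (Sg i) = S_mat i" and lm_T: "letter_mat (Tg i) = S_perp i"
  by (simp_all add: letter_mat_def)

lemma sg_upd1: "sg (\<chi> k. if k = i then A else x$k) = sg x - x$i + A"
  using exhaust_4[of i] by (auto simp: sg_def sum_4)
lemma sg_upd2: "sg (\<chi> k. if k = i then A else x$k + C) = sg x - x$i + A + 3*C"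
  using exhaust_4[of i] by (auto simp: sg_def sum_4)

lemma sg_act: "sg (letter_mat (Sg i) *v x) = 3 * sg x - 4*x$i"
   "sg (letter_mat (Tg i) *v x) = sg x + 4*x$i"
  by (auto simp: lm_S lm_T Smv Tmv sg_upd1 sg_upd2)

lemma qf_act: "qf (letter_mat a *v x) = qf x"
proof (cases a)
  case (Sg i) then show ?thesis using exhaust_4[of i]
    by (auto simp: lm_S Smv qf_def sg_def sum_4 power2_eq_square algebra_simps)
next
  case (Tg i) then show ?thesis using exhaust_4[of i]
    by (auto simp: lm_T Tmv qf_def sg_def sum_4 power2_eq_square algebra_simps)
qed

lemma fl_self: "fl a (letter_mat a *v x) = - fl a x"
  by (cases a) (auto simp: sg_upd1 sg_upd2 lm_S lm_T Smv Tmv)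

lemma fl_cm: "cm a c \<Longrightarrow> fl c (letter_mat a *v x) = fl c x"
  unfolding cm_def by (auto simp: sg_upd1 sg_upd2 lm_S lm_T Smv Tmv)

lemma sg_pos: "sg x > 0 \<Longrightarrow> fl a x > 0 \<Longrightarrow> sg (letter_mat a *v x) > 0"
  by (cases a) (auto simp: sg_act)

lemma H: fixes a b c d :: int
  shows "(a+b+c+d)^2 - 2*(a^2+b^2+c^2+d^2) \<le> 2*((a+b)*(c+d))"
proof -
  have "(a+b+c+d)^2 - 2*(a^2+b^2+c^2+d^2) = 2*((a+b)*(c+d)) - (a-b)^2 - (c-d)^2"
    by (simp add: power2_eq_square algebra_simps)
  then show ?thesis by (smt (verit) zero_le_power2)
qed

lemma pair_1_2: "qf x \<le> 2*((x$(1::4)+x$(2::4))*(sg x - x$(1::4) - x$(2::4)))"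
  using H[of "x$(1::4)" "x$(2::4)" "x$(3::4)" "x$(4::4)"] by (simp add: qf_def sg_def sum_4 ac_simps)
lemma pair_1_3: "qf x \<le> 2*((x$(1::4)+x$(3::4))*(sg x - x$(1::4) - x$(3::4)))"
  using H[of "x$(1::4)" "x$(3::4)" "x$(2::4)" "x$(4::4)"] by (simp add: qf_def sg_def sum_4 ac_simps)
lemma pair_1_4: "qf x \<le> 2*((x$(1::4)+x$(4::4))*(sg x - x$(1::4) - x$(4::4)))"
  using H[of "x$(1::4)" "x$(4::4)" "x$(2::4)" "x$(3::4)"] by (simp add: qf_def sg_def sum_4 ac_simps)
lemma pair_2_1: "qf x \<le> 2*((x$(2::4)+x$(1::4))*(sg x - x$(2::4) - x$(1::4)))"
  using H[of "x$(2::4)" "x$(1::4)" "x$(3::4)" "x$(4::4)"] by (simp add: qf_def sg_def sum_4 ac_simps)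
lemma pair_2_3: "qf x \<le> 2*((x$(2::4)+x$(3::4))*(sg x - x$(2::4) - x$(3::4)))"
  using H[of "x$(2::4)" "x$(3::4)" "x$(1::4)" "x$(4::4)"] by (simp add: qf_def sg_def sum_4 ac_simps)
lemma pair_2_4: "qf x \<le> 2*((x$(2::4)+x$(4::4))*(sg x - x$(2::4) - x$(4::4)))"
  using H[of "x$(2::4)" "x$(4::4)" "x$(1::4)" "x$(3::4)"] by (simp add: qf_def sg_def sum_4 ac_simps)
lemma pair_3_1: "qf x \<le> 2*((x$(3::4)+x$(1::4))*(sg x - x$(3::4) - x$(1::4)))"
  using H[of "x$(3::4)" "x$(1::4)" "x$(2::4)" "x$(4::4)"] by (simp add: qf_def sg_def sum_4 ac_simps)
lemma pair_3_2: "qf x \<le> 2*((x$(3::4)+x$(2::4))*(sg x - x$(3::4) - x$(2::4)))"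
  using H[of "x$(3::4)" "x$(2::4)" "x$(1::4)" "x$(4::4)"] by (simp add: qf_def sg_def sum_4 ac_simps)
lemma pair_3_4: "qf x \<le> 2*((x$(3::4)+x$(4::4))*(sg x - x$(3::4) - x$(4::4)))"
  using H[of "x$(3::4)" "x$(4::4)" "x$(1::4)" "x$(2::4)"] by (simp add: qf_def sg_def sum_4 ac_simps)
lemma pair_4_1: "qf x \<le> 2*((x$(4::4)+x$(1::4))*(sg x - x$(4::4) - x$(1::4)))"
  using H[of "x$(4::4)" "x$(1::4)" "x$(2::4)" "x$(3::4)"] by (simp add: qf_def sg_def sum_4 ac_simps)
lemma pair_4_2: "qf x \<le> 2*((x$(4::4)+x$(2::4))*(sg x - x$(4::4) - x$(2::4)))"
  using H[of "x$(4::4)" "x$(2::4)" "x$(1::4)" "x$(3::4)"] by (simp add: qf_def sg_def sum_4 ac_simps)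
lemma pair_4_3: "qf x \<le> 2*((x$(4::4)+x$(3::4))*(sg x - x$(4::4) - x$(3::4)))"
  using H[of "x$(4::4)" "x$(3::4)" "x$(1::4)" "x$(2::4)"] by (simp add: qf_def sg_def sum_4 ac_simps)
lemma pair: "i \<noteq> j \<Longrightarrow> qf x \<le> 2*((x$i+x$j)*(sg x - x$i - x$j))"
  using exhaust_4[of i] exhaust_4[of j] pair_1_2 pair_1_3 pair_1_4 pair_2_1 pair_2_3 pair_2_4 pair_3_1 pair_3_2 pair_3_4 pair_4_1 pair_4_2 pair_4_3 by auto

lemma key:
  assumes "a \<noteq> c" "\<not> cm a c" "qf x > 0" "sg x > 0" "fl a x < 0" "fl c x \<le> 0"
  shows False
proof (cases a)
  case (Sg i)
  show ?thesis
  proof (cases c)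
    case (Sg j)
    with \<open>a = Sg i\<close> assms have ij: "i \<noteq> j" by auto
    define p where "p = x$i + x$j"
    define R where "R = sg x - x$i - x$j"
    have "R < 0" "p > 0" using assms \<open>a = Sg i\<close> Sg by (auto simp: R_def p_def)
    then have "p * R < 0" by (simp add: mult_pos_neg)
    moreover have "qf x \<le> 2*(p*R)" using pair[OF ij, of x] by (simp only: p_def R_def)
    ultimately show False using assms(3) by linarith
  next
    case (Tg j)
    with \<open>a = Sg i\<close> assms(2) have "i = j" by (auto simp: cm_def)
    with assms \<open>a = Sg i\<close> Tg show False by auto
  qed
next
  case (Tg i)
  show ?thesis
  proof (cases c)
    case (Tg j)
    with \<open>a = Tg i\<close> assms have ij: "i \<noteq> j" by auto
    define p where "p = x$i + x$j"
    define R where "R = sg x - x$i - x$j"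
    have "R > 0" "p < 0" using assms \<open>a = Tg i\<close> Tg by (auto simp: R_def p_def)
    then have "p * R < 0" by (simp add: mult_neg_pos)
    moreover have "qf x \<le> 2*(p*R)" using pair[OF ij, of x] by (simp only: p_def R_def)
    ultimately show False using assms(3) by linarith
  next
    case (Sg j)
    with \<open>a = Tg i\<close> assms(2) have "i = j" by (auto simp: cm_def)
    with assms \<open>a = Tg i\<close> Sg show False by auto
  qed
qed

lemma pt_Nil: "pt [] = v0" by (simp add: pt_def eval_Nil)
lemma pt_Cons: "pt (a#w) = letter_mat a *v pt w"
  by (simp add: pt_def eval_Cons matrix_vector_mul_assoc)
lemma v0_facts: "qf v0 = 8" "sg v0 = 4" "fl a v0 > 0"
    apply (simp_all add: v0_def qf_def sg_def sum_4)
  by (cases a) (simp_all add: sum_4 sg_def)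
lemma v0_h: "fl c v0 \<noteq> 0 \<and> \<not> fl c v0 < 0"
  using v0_facts(3)[of c] by simp

definition good :: "letter list \<Rightarrow> bool" where
  "good w \<longleftrightarrow> qf (pt w) = 8 \<and> sg (pt w) > 0 \<and> (\<forall>c. fl c (pt w) \<noteq> 0) \<and>
     (\<forall>c. fl c (pt w) < 0 \<longrightarrow> (\<exists>w'. word_eq w (c#w') \<and> length w' < length w))"

lemma pt_eq: "word_eq u v \<Longrightarrow> pt u = pt v"
  by (simp add: pt_def word_eq_eval)

lemma all_good: "good w"
proof (induction w rule: length_induct)
  case (1 w)
  show ?case
  proof (cases w)
    case Nil then show ?thesis
      by (simp add: good_def pt_Nil v0_facts(1,2) v0_h)
  next
    case (Cons b u)
    have gu: "good u" using 1 Cons by simp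
    let ?y = "pt u"
    have xy: "pt w = letter_mat b *v ?y" using Cons pt_Cons by simp
    from gu have "fl b ?y \<noteq> 0" by (simp add: good_def)
    then consider "fl b ?y < 0" | "fl b ?y > 0" by linarith
    then show ?thesis
    proof cases
      case 1
      then obtain u'' where u'': "word_eq u (b#u'')" "length u'' < length u"
        using gu by (auto simp: good_def)
      have "word_eq (b#u) (b#b#u'')" using cong[OF u''(1), of "[b]" "[]"] by simp
      then have we: "word_eq w u''" using Cons cancel word_eq.trans by blast
      have gu'': "good u''" using "1.IH" Cons u''(2) by simp
      have "pt w = pt u''" by (rule pt_eq[OF we])
      then show ?thesis using gu'' we Cons u''(2) unfolding good_def
        by (metis (no_types, lifting) dual_order.strict_trans word_eq.trans length_Cons less_Suc_eq)
    next
      case 2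
      have q: "qf (pt w) = 8" using gu xy qf_act by (simp add: good_def)
      have s: "sg (pt w) > 0" using gu xy sg_pos 2 by (simp add: good_def)
      have fb: "fl b (pt w) < 0" using xy fl_self 2 by simp
      have "fl c (pt w) \<noteq> 0 \<and> (fl c (pt w) < 0 \<longrightarrow> (\<exists>w'. word_eq w (c#w') \<and> length w' < length w))" for c
      proof (cases "c = b")
        case True then show ?thesis using fb Cons by (auto intro: word_eq.refl)
      next
        case False
        show ?thesis
        proof (cases "cm b c")
          case True
          have fc: "fl c (pt w) = fl c ?y" using xy fl_cm[OF True] by simp
          show ?thesis
          proof (intro conjI impI)
            show "fl c (pt w) \<noteq> 0" using fc gu by (simp add: good_def)
          next
            assume "fl c (pt w) < 0"
            then obtain u' where u': "word_eq u (c#u')" "length u' < length u"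
              using gu fc by (auto simp: good_def)
            have "word_eq (b#u) (b#c#u')" using cong[OF u'(1), of "[b]" "[]"] by simp
            then have "word_eq w (c#b#u')" using Cons swap[OF True] word_eq.trans by blast
            then show "\<exists>w'. word_eq w (c#w') \<and> length w' < length w" using u'(2) Cons
              by (intro exI[of _ "b#u'"]) simp
          qed
        next
          case False2: False
          have "fl c (pt w) > 0"
          proof (rule ccontr)
            assume "\<not> fl c (pt w) > 0"
            then show False using key[of b c "pt w"] False False2 q s fb by simp
          qed
          then show ?thesis by simp
        qed
      qed
      then show ?thesis using q s by (simp add: good_def)
    qed
  qed
qed

lemma triv: "eval_word w = mat 1 \<Longrightarrow> word_eq w []"
proof (induction w rule: length_induct)
  case (1 w)
  show ?case
  proof (cases w)
    case Nil then show ?thesis by (simp add: word_eq.refl)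
  next
    case (Cons b u)
    have gu: "good u" by (rule all_good)
    have ptw: "pt w = v0" using 1(2) by (simp add: pt_def matrix_vector_mul_lid)
    have xy: "pt w = letter_mat b *v pt u" using Cons pt_Cons by simp
    from gu have "fl b (pt u) \<noteq> 0" by (simp add: good_def)
    then consider "fl b (pt u) < 0" | "fl b (pt u) > 0" by linarith
    then show ?thesis
    proof cases
      case 1
      then obtain u'' where u'': "word_eq u (b#u'')" "length u'' < length u"
        using gu by (auto simp: good_def)
      have "word_eq (b#u) (b#b#u'')" using cong[OF u''(1), of "[b]" "[]"] by simp
      then have we: "word_eq w u''" using Cons cancel word_eq.trans by blast
      have "eval_word u'' = mat 1" using word_eq_eval[OF we] "1.prems" by simp
      then have "word_eq u'' []" using "1.IH" Cons u''(2) by simp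
      then show ?thesis using we word_eq.trans by blast
    next
      case 2
      then have "fl b (pt w) < 0" using xy fl_self by simp
      then show ?thesis using ptw v0_facts(3)[of b] by simp
    qed
  qed
qed

theorem theorem6p1:
  shows "\<forall>u v. eval_word u = eval_word v \<longleftrightarrow> word_eq u v"
proof (intro allI iffI)
  fix u v :: "letter list"
  assume "word_eq u v" then show "eval_word u = eval_word v" by (rule word_eq_eval)
next
  fix u v :: "letter list"
  assume h: "eval_word u = eval_word v"
  have "eval_word (rev v @ v) = mat 1"
    using word_eq_eval[OF rev_cancel[of "rev v"]] by (simp add: eval_Nil)
  then have "eval_word (rev v @ u) = mat 1" using h by (simp add: eval_append)
  then have 1: "word_eq (rev v @ u) []" by (rule triv)
  have 2: "word_eq (v @ (rev v @ u) @ []) (v @ [] @ [])" by (rule cong[OF 1])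
  have 3: "word_eq ([] @ (v @ rev v) @ u) ([] @ [] @ u)" by (rule cong[OF rev_cancel])
  from 2 3 show "word_eq u v" by simp (meson word_eq.sym word_eq.trans)
qed

end
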